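(* Let $f(x)=\frac1n\sum_{i=1}^nf_i(x)$ on $\mathbb{R}^d$ where each $f_i$ is convex (not necessarily differentiable) and lower bounded, and let $x^*$ be a minimizer of $f$. For any non-decreasing positive sequence $(c_k)_{k\ge0}$, consider the stochastic subgradient method with the DecSPS-NS stepsize (defined in the context). Then for every $K\ge1$, $$\mathbb{E}[f(\bar x^K)-f(x^* )]\le\frac{c_{K-1}D^2}{\gamma_\ell c_0K}+\frac1K\sum_{k=0}^{K-1}\frac{c_0\gamma_bG^2}{c_k},$$ where $\bar x^K=\frac1K\sum_{k=0}^{K-1}x^k$, $D^2:=\max_{k\in[K-1]}\|x^k-x^*\|^2$ and $G^2:=\max_{k\in[K-1]}\|g_{\mathcal S_k}(x^k)\|^2$.
   Context: Minibatches: fix a batch size $B$; at each iteration a subset $\mathcal S_k\subseteq[n]$, $|\mathcal S_k|=B$, is sampled uniformly at random, independently across iterations. For $\mathcal S\subseteq[n]$, $f_{\mathcal S}:=\frac1{|\mathcal S|}\sum_{i\in\mathcal S}f_i$, $f^*_{\mathcal S}:=\inf_xf_{\mathcal S}(x)$, $\ell^*_{\mathcal S}$ is a given real number with $\ell^*_{\mathcal S}\le f^*_{\mathcal S}$, and $g_{\mathcal S}(x)$ denotes a subgradient of $f_{\mathcal S}$ at $x$. Method: $x^{k+1}=x^k-\gamma_kg_{\mathcal S_k}(x^k)$. DecSPS-NS stepsize: $\gamma_k:=\frac1{c_k}\min\left\{\max\left\{c_0\gamma_\ell,\ \frac{f_{\mathcal S_k}(x^k)-\ell^*_{\mathcal S_k}}{\|g_{\mathcal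 S_k}(x^k)\|^2}\right\},\ c_{k-1}\gamma_{k-1}\right\}$ for $k\ge0$, with $c_{-1}=c_0$, $\gamma_{-1}=\gamma_b$, where $0<\gamma_\ell\le\gamma_b$ are fixed constants. $[K-1]$ denotes $\{0,\dots,K-1\}$. *)

theory Defs
  imports "HOL-Analysis.Analysis"
begin

definition is_subgradient :: "('a::real_inner \<Rightarrow> real) \<Rightarrow> 'a \<Rightarrow> 'a \<Rightarrow> bool" where
  "is_subgradient h x g \<longleftrightarrow> (\<forall>y. h y \<ge> h x + g \<bullet> (y - x))"

definition batch_f :: "(nat \<Rightarrow> 'a \<Rightarrow> real) \<Rightarrow> nat set \<Rightarrow> 'a \<Rightarrow> real" where
  "batch_f fs S x = (\<Sum>i\<in>S. fs i x) / real (card S)"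

definition full_f :: "nat \<Rightarrow> (nat \<Rightarrow> 'a \<Rightarrow> real) \<Rightarrow> 'a \<Rightarrow> real" where
  "full_f n fs x = (\<Sum>i<n. fs i x) / real n"

definition batches :: "nat \<Rightarrow> nat \<Rightarrow> nat set set" where
  "batches n B = {S. S \<subseteq> {..<n} \<and> card S = B}"

text \<open>State of the method after k steps: (x^k, gamma_{k-1}), with gamma_{-1} = gamma_b,
  c_{-1} = c_0.  omega k is the minibatch S_k, g S x the subgradient oracle for f_S,
  lstar S the lower bound ell*_S.\<close>
primrec decsps_state ::
  "(nat \<Rightarrow> 'a::real_inner \<Rightarrow> real) \<Rightarrow> (nat set \<Rightarrow> real) \<Rightarrow> (nat set \<Rightarrow> 'a \<Rightarrow> 'a)
   \<Rightarrow> (nat \<Rightarrow> real) \<Rightarrow> real \<Rightarrow> real \<Rightarrow> 'a \<Rightarrow> (nat \<Rightarrow> nat set) \<Rightarrow> nat \<Rightarrow> 'a \<times> real" where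
  "decsps_state fs lstar g c gl gb x0 \<omega> 0 = (x0, gb)"
| "decsps_state fs lstar g c gl gb x0 \<omega> (Suc k) =
     (let (x, gprev) = decsps_state fs lstar g c gl gb x0 \<omega> k;
          S = \<omega> k;
          cprev = (if k = 0 then c 0 else c (k - 1));
          gam = min (max (c 0 * gl) ((batch_f fs S x - lstar S) / (norm (g S x))\<^sup>2))
                    (cprev * gprev) / c k
      in (x - gam *\<^sub>R g S x, gam))"

definition decsps_iter ::
  "(nat \<Rightarrow> 'a::real_inner \<Rightarrow> real) \<Rightarrow> (nat set \<Rightarrow> real) \<Rightarrow> (nat set \<Rightarrow> 'a \<Rightarrow> 'a)
   \<Rightarrow> (nat \<Rightarrow> real) \<Rightarrow> real \<Rightarrow> real \<Rightarrow> 'a \<Rightarrow> (nat \<Rightarrow> nat set) \<Rightarrow> nat \<Rightarrow> 'a" where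
  "decsps_iter fs lstar g c gl gb x0 \<omega> k = fst (decsps_state fs lstar g c gl gb x0 \<omega> k)"

text \<open>Expectation over i.i.d. uniform minibatches S_0,...,S_{K-1}: the uniform average
  over all sequences of K admissible minibatches.\<close>
definition batch_expect :: "nat \<Rightarrow> nat \<Rightarrow> nat \<Rightarrow> ((nat \<Rightarrow> nat set) \<Rightarrow> real) \<Rightarrow> real" where
  "batch_expect n B K X =
     (let \<Omega> = PiE {..<K} (\<lambda>_. batches n B) in (\<Sum>\<omega>\<in>\<Omega>. X \<omega>) / real (card \<Omega>))"

end

theory Submission
  imports Defs
begin

lemma card_batches_with:
  assumes "i < n" "1 \<le> B"
  shows "card {S \<in> batches n B. i \<in> S} = (n - 1) choose (B - 1)"
proof -
  have eq: "{S \<in> batches n B. i \<in> S} = insert i ` {T. T \<subseteq> {..<n} - {i} \<and> card T = B - 1}"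
  proof (rule set_eqI, rule iffI)
    fix S assume "S \<in> {S \<in> batches n B. i \<in> S}"
    then have S: "S \<subseteq> {..<n}" "card S = B" "i \<in> S" by (auto simp: batches_def)
    have fin: "finite S" using S(1) finite_subset by blast
    have "S = insert i (S - {i})" using S by auto
    moreover have "S - {i} \<subseteq> {..<n} - {i}" using S by auto
    moreover have "card (S - {i}) = B - 1" using S fin by simp
    ultimately show "S \<in> insert i ` {T. T \<subseteq> {..<n} - {i} \<and> card T = B - 1}" by blast
  next
    fix S assume "S \<in> insert i ` {T. T \<subseteq> {..<n} - {i} \<and> card T = B - 1}"
    then obtain T where T: "S = insert i T" "T \<subseteq> {..<n} - {i}" "card T = B - 1" by auto
    have fin: "finite T" using T(2) finite_subset by blast
    have "i \<notin> T" using T by auto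
    then have "card S = B" using T fin assms by simp
    then show "S \<in> {S \<in> batches n B. i \<in> S}" using T assms by (auto simp: batches_def)
  qed
  have inj: "inj_on (insert i) {T. T \<subseteq> {..<n} - {i} \<and> card T = B - 1}"
    by (rule inj_onI) blast
  have "card {S \<in> batches n B. i \<in> S} = card {T. T \<subseteq> {..<n} - {i} \<and> card T = B - 1}"
    unfolding eq by (rule card_image[OF inj])
  also have "\<dots> = card ({..<n} - {i}) choose (B - 1)"
    by (rule n_subsets) simp
  also have "card ({..<n} - {i}) = n - 1" using assms by simp
  finally show ?thesis .
qed

lemma card_batches: "card (batches n B) = n choose B"
  unfolding batches_def using n_subsets[of "{..<n}" B] by simp

lemma finite_batches: "finite (batches n B)"
  unfolding batches_def by (rule finite_subset[of _ "Pow {..<n}"]) auto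

lemma batch_avg:
  assumes "1 \<le> B" "B \<le> n"
  shows "(\<Sum>S\<in>batches n B. batch_f fs S x) = real (card (batches n B)) * full_f n fs x"
proof -
  have "(\<Sum>S\<in>batches n B. batch_f fs S x) = (\<Sum>S\<in>batches n B. (\<Sum>i\<in>{i. i \<in> {..<n} \<and> i \<in> S}. fs i x) / real B)"
  proof (rule sum.cong[OF refl])
    fix S assume "S \<in> batches n B"
    then have S: "S \<subseteq> {..<n}" "card S = B" by (auto simp: batches_def)
    then have "{i. i \<in> {..<n} \<and> i \<in> S} = S" by auto
    then show "batch_f fs S x = (\<Sum>i\<in>{i. i \<in> {..<n} \<and> i \<in> S}. fs i x) / real B"
      using S by (simp add: batch_f_def)
  qed
  also have "\<dots> = (\<Sum>S\<in>batches n B. (\<Sum>i\<in>{i. i \<in> {..<n} \<and> i \<in> S}. fs i x)) / real B"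
    by (rule sum_divide_distrib[symmetric])
  also have "(\<Sum>S\<in>batches n B. (\<Sum>i\<in>{i. i \<in> {..<n} \<and> i \<in> S}. fs i x))
      = (\<Sum>i<n. \<Sum>S\<in>{S. S \<in> batches n B \<and> i \<in> S}. fs i x)"
    by (rule sum.swap_restrict) (auto simp: finite_batches)
  also have "\<dots> = (\<Sum>i<n. real ((n - 1) choose (B - 1)) * fs i x)"
    using card_batches_with[OF _ assms(1)] by (intro sum.cong refl) simp
  finally have 1: "(\<Sum>S\<in>batches n B. batch_f fs S x) = real ((n - 1) choose (B - 1)) * (\<Sum>i<n. fs i x) / real B"
    by (simp add: sum_distrib_left)
  have "Suc (n - 1) * ((n - 1) choose (B - 1)) = (Suc (n - 1) choose Suc (B - 1)) * Suc (B - 1)"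
    by (rule Suc_times_binomial_eq)
  then have "n * ((n - 1) choose (B - 1)) = (n choose B) * B" using assms by simp
  then have 2: "real n * real ((n - 1) choose (B - 1)) = real (n choose B) * real B"
    by (metis of_nat_mult)
  have "real ((n - 1) choose (B - 1)) / real B = real (n choose B) / real n"
    using 2 assms by (simp add: field_simps)
  then show ?thesis using 1 unfolding card_batches full_f_def
    by (metis (no_types, lifting) times_divide_eq_left times_divide_eq_right mult.commute)
qed

lemma sum_PiE_indep:
  fixes \<phi> :: "'s \<Rightarrow> 'x \<Rightarrow> real" and X :: "('i \<Rightarrow> 's) \<Rightarrow> 'x"
  assumes "finite I" "k \<in> I" "finite A"
    and dep: "\<And>\<omega> \<omega>'. (\<forall>j\<in>I-{k}. \<omega> j = \<omega>' j) \<Longrightarrow> X \<omega> = X \<omega>'"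
  shows "(\<Sum>\<omega>\<in>PiE I (\<lambda>_. A). \<Sum>S\<in>A. \<phi> S (X \<omega>))
       = real (card A) * (\<Sum>\<omega>\<in>PiE I (\<lambda>_. A). \<phi> (\<omega> k) (X \<omega>))"
proof -
  define P where "P = PiE (I - {k}) (\<lambda>_. A)"
  have fP: "finite P" unfolding P_def using assms by (intro finite_PiE) auto
  have I: "I = insert k (I - {k})" using assms by auto
  have Om: "PiE I (\<lambda>_. A) = (\<lambda>(y, h). h(k := y)) ` (A \<times> P)"
    unfolding P_def by (subst I) (rule PiE_insert_eq)
  have inj: "inj_on (\<lambda>(y, h). h(k := y)) (A \<times> P)"
    unfolding P_def using inj_combinator[of k "I - {k}" "\<lambda>_. A"] by simp
  have Xu: "X (h(k := y)) = X h" for h y by (rule dep) auto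
  have re: "(\<Sum>\<omega>\<in>PiE I (\<lambda>_. A). F \<omega>) = (\<Sum>(y, h)\<in>A \<times> P. F (h(k := y)))" for F :: "('i \<Rightarrow> 's) \<Rightarrow> real"
    unfolding Om by (subst sum.reindex[OF inj]) (simp add: case_prod_beta comp_def)
  have "(\<Sum>\<omega>\<in>PiE I (\<lambda>_. A). \<Sum>S\<in>A. \<phi> S (X \<omega>)) = (\<Sum>(y, h)\<in>A \<times> P. \<Sum>S\<in>A. \<phi> S (X h))"
    unfolding re by (simp add: Xu)
  also have "\<dots> = (\<Sum>y\<in>A. \<Sum>h\<in>P. \<Sum>S\<in>A. \<phi> S (X h))"
    by (rule sum.cartesian_product[symmetric])
  also have "\<dots> = real (card A) * (\<Sum>h\<in>P. \<Sum>S\<in>A. \<phi> S (X h))" by simp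
  also have "(\<Sum>h\<in>P. \<Sum>S\<in>A. \<phi> S (X h)) = (\<Sum>S\<in>A. \<Sum>h\<in>P. \<phi> S (X h))"
    by (rule sum.swap)
  also have "\<dots> = (\<Sum>(y, h)\<in>A \<times> P. \<phi> y (X h))"
    by (rule sum.cartesian_product)
  also have "\<dots> = (\<Sum>\<omega>\<in>PiE I (\<lambda>_. A). \<phi> (\<omega> k) (X \<omega>))"
    unfolding re by (simp add: Xu)
  finally show ?thesis .
qed


lemma telescope:
  fixes d G :: "nat \<Rightarrow> real"
  assumes "\<forall>k. d k \<ge> 0" "\<forall>k. G k > 0" "\<forall>k. G (Suc k) \<le> G k" "\<forall>k<K. d k \<le> M" "K \<ge> 1"
  shows "(\<Sum>k<K. (d k - d (Suc k)) / G k) \<le> (M - d K) / G (K - 1)"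
  using assms(4,5)
proof (induction K)
  case 0 then show ?case by simp
next
  case (Suc K)
  show ?case
  proof (cases "K = 0")
    case True
    have "G 0 > 0" using assms(2) by simp
    then show ?thesis using Suc.prems True by (simp add: divide_right_mono)
  next
    case False
    then have IH: "(\<Sum>k<K. (d k - d (Suc k)) / G k) \<le> (M - d K) / G (K - 1)"
      using Suc by simp
    have GK: "G K \<le> G (K - 1)" using assms(3) False by (metis Suc_pred' not_gr_zero)
    have "(M - d K) / G (K - 1) \<le> (M - d K) / G K"
      using Suc.prems GK assms(2) by (intro divide_left_mono) auto
    then have "(\<Sum>k<Suc K. (d k - d (Suc k)) / G k) \<le> (M - d K) / G K + (d K - d (Suc K)) / G K"
      using IH by simp
    also have "\<dots> = (M - d (Suc K)) / G K" by (simp add: diff_divide_distrib)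
    finally show ?thesis by simp
  qed
qed

lemma st_dep: "(\<forall>j<k. \<omega> j = \<omega>' j) \<Longrightarrow>
   decsps_state fs lstar g c gl gb x0 \<omega> k = decsps_state fs lstar g c gl gb x0 \<omega>' k"
  by (induction k) (auto simp: Let_def split_beta)

lemma st_Suc: "decsps_state fs lstar g c gl gb x0 \<omega> (Suc k) =
  (let x = fst (decsps_state fs lstar g c gl gb x0 \<omega> k);
       gp = snd (decsps_state fs lstar g c gl gb x0 \<omega> k);
       gam = min (max (c 0 * gl) ((batch_f fs (\<omega> k) x - lstar (\<omega> k)) / (norm (g (\<omega> k) x))\<^sup>2))
                    ((if k = 0 then c 0 else c (k - 1)) * gp) / c k
   in (x - gam *\<^sub>R g (\<omega> k) x, gam))"
  by (simp add: Let_def split_beta)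

lemma gam_eq:
  assumes "c k > 0"
  shows "c k * snd (decsps_state fs lstar g c gl gb x0 \<omega> (Suc k)) =
     min (max (c 0 * gl) ((batch_f fs (\<omega> k) (fst (decsps_state fs lstar g c gl gb x0 \<omega> k)) - lstar (\<omega> k))
            / (norm (g (\<omega> k) (fst (decsps_state fs lstar g c gl gb x0 \<omega> k))))\<^sup>2))
         ((if k = 0 then c 0 else c (k - 1)) * snd (decsps_state fs lstar g c gl gb x0 \<omega> k))"
  using assms by (simp only: st_Suc Let_def snd_conv) simp

lemma gam_bounds:
  assumes "\<forall>k. c k > 0" "0 < gl" "gl \<le> gb"
  shows "c 0 * gl \<le> c k * snd (decsps_state fs lstar g c gl gb x0 \<omega> (Suc k))
       \<and> c k * snd (decsps_state fs lstar g c gl gb x0 \<omega> (Suc k)) \<le> c 0 * gb"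
proof (induction k)
  case 0
  have "c 0 > 0" using assms by auto
  then show ?case using assms gam_eq[of c 0 fs lstar g gl gb x0 \<omega>]
    by (simp del: decsps_state.simps add: decsps_state.simps(1) min_def max_def mult_left_mono)
next
  case (Suc k)
  have "c (Suc k) > 0" using assms by auto
  then show ?case using Suc gam_eq[of c "Suc k" fs lstar g gl gb x0 \<omega>]
    by (simp del: decsps_state.simps add: min_def max_def)
qed

lemma gam_pos:
  assumes "\<forall>k. c k > 0" "0 < gl" "gl \<le> gb"
  shows "snd (decsps_state fs lstar g c gl gb x0 \<omega> (Suc k)) > 0"
proof -
  have "c 0 * gl > 0" using assms by auto
  then have "c k * snd (decsps_state fs lstar g c gl gb x0 \<omega> (Suc k)) > 0"
    using gam_bounds[OF assms, of k fs lstar g x0 \<omega>] by linarith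
  then show ?thesis using assms(1) zero_less_mult_pos by blast
qed

lemma gam_mono:
  assumes "\<forall>k. c k > 0" "0 < gl" "gl \<le> gb" "mono c"
  shows "snd (decsps_state fs lstar g c gl gb x0 \<omega> (Suc (Suc k))) \<le> snd (decsps_state fs lstar g c gl gb x0 \<omega> (Suc k))"
proof -
  let ?G = "snd (decsps_state fs lstar g c gl gb x0 \<omega> (Suc k))"
  let ?G' = "snd (decsps_state fs lstar g c gl gb x0 \<omega> (Suc (Suc k)))"
  have pos: "c k > 0" "c (Suc k) > 0" using assms by auto
  have Gpos: "?G > 0" using gam_pos[OF assms(1-3)] .
  have ck: "c k \<le> c (Suc k)" using assms(4) by (simp add: mono_def)
  have "c (Suc k) * ?G' \<le> c k * ?G"
    using gam_eq[of c "Suc k" fs lstar g gl gb x0 \<omega>] pos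
    by (simp del: decsps_state.simps)
  also have "\<dots> \<le> c (Suc k) * ?G" using ck Gpos by (intro mult_right_mono) auto
  finally show ?thesis using pos by simp
qed


lemma det_bound:
  fixes xstar :: "'a::real_inner"
  assumes cpos: "\<forall>k. c k > 0" and gl: "0 < gl" and glb: "gl \<le> gb" and cm: "mono c" and K: "K \<ge> 1"
    and subg: "\<forall>k<K. is_subgradient (batch_f fs (\<omega> k)) (decsps_iter fs lstar g c gl gb x0 \<omega> k)
                     (g (\<omega> k) (decsps_iter fs lstar g c gl gb x0 \<omega> k))"
  defines "D2 \<equiv> Max ((\<lambda>k. (norm (decsps_iter fs lstar g c gl gb x0 \<omega> k - xstar))\<^sup>2) ` {..<K})"
    and "G2 \<equiv> Max ((\<lambda>k. (norm (g (\<omega> k) (decsps_iter fs lstar g c gl gb x0 \<omega> k)))\<^sup>2) ` {..<K})"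
  shows "(\<Sum>k<K. batch_f fs (\<omega> k) (decsps_iter fs lstar g c gl gb x0 \<omega> k) - batch_f fs (\<omega> k) xstar)
         \<le> (c (K - 1) * D2 / (gl * c 0) + (\<Sum>k<K. c 0 * gb * G2 / c k)) / 2"
proof -
  define x where "x k = decsps_iter fs lstar g c gl gb x0 \<omega> k" for k
  define \<Gamma> where "\<Gamma> k = snd (decsps_state fs lstar g c gl gb x0 \<omega> (Suc k))" for k
  define d where "d k = (norm (x k - xstar))\<^sup>2" for k
  define gg where "gg k = g (\<omega> k) (x k)" for k
  define a where "a k = batch_f fs (\<omega> k) (x k) - batch_f fs (\<omega> k) xstar" for k
  have xs: "x (Suc k) = x k - \<Gamma> k *\<^sub>R gg k" for k
    unfolding x_def \<Gamma>_def gg_def decsps_iter_def by (simp only: st_Suc Let_def fst_conv snd_conv)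
  have Gpos: "\<Gamma> k > 0" for k unfolding \<Gamma>_def using gam_pos[OF cpos gl glb] .
  have Gmono: "\<Gamma> (Suc k) \<le> \<Gamma> k" for k unfolding \<Gamma>_def using gam_mono[OF cpos gl glb cm] .
  have Gb: "c 0 * gl \<le> c k * \<Gamma> k \<and> c k * \<Gamma> k \<le> c 0 * gb" for k
    unfolding \<Gamma>_def using gam_bounds[OF cpos gl glb] .
  have c0: "c 0 > 0" using cpos by auto
  have fin: "finite {..<K}" "{..<K} \<noteq> {}" using K by (auto simp: lessThan_empty_iff)
  have dD: "d k \<le> D2" if "k < K" for k
    unfolding D2_def d_def x_def using that fin by (intro Max_ge) auto
  have gG: "(norm (gg k))\<^sup>2 \<le> G2" if "k < K" for k
    unfolding G2_def gg_def x_def using that fin by (intro Max_ge) auto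
  have d0: "d k \<ge> 0" for k unfolding d_def by simp
  have step: "2 * a k \<le> (d k - d (Suc k)) / \<Gamma> k + \<Gamma> k * (norm (gg k))\<^sup>2" if "k < K" for k
  proof -
    have sg: "batch_f fs (\<omega> k) xstar \<ge> batch_f fs (\<omega> k) (x k) + gg k \<bullet> (xstar - x k)"
      using subg that unfolding is_subgradient_def x_def gg_def by blast
    have ip: "gg k \<bullet> (x k - xstar) \<ge> a k"
      using sg unfolding a_def by (simp add: inner_diff_right)
    have "d (Suc k) = d k - 2 * \<Gamma> k * (gg k \<bullet> (x k - xstar)) + (\<Gamma> k)\<^sup>2 * (norm (gg k))\<^sup>2"
    proof -
      have e: "x (Suc k) - xstar = (x k - xstar) - \<Gamma> k *\<^sub>R gg k" unfolding xs by simp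
      show ?thesis unfolding d_def e power2_norm_eq_inner
        by (simp add: inner_diff_left inner_diff_right inner_commute algebra_simps power2_eq_square)
    qed
    then have "d (Suc k) \<le> d k - 2 * \<Gamma> k * a k + (\<Gamma> k)\<^sup>2 * (norm (gg k))\<^sup>2"
      using ip Gpos[of k] by (smt (verit) mult_left_mono)
    then have "2 * a k * \<Gamma> k \<le> d k - d (Suc k) + (\<Gamma> k)\<^sup>2 * (norm (gg k))\<^sup>2"
      by (simp add: algebra_simps)
    then have "2 * a k \<le> (d k - d (Suc k) + (\<Gamma> k)\<^sup>2 * (norm (gg k))\<^sup>2) / \<Gamma> k"
      using Gpos[of k] by (simp add: pos_le_divide_eq)
    also have "\<dots> = (d k - d (Suc k)) / \<Gamma> k + \<Gamma> k * (norm (gg k))\<^sup>2"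
      using Gpos[of k] by (simp add: add_divide_distrib power2_eq_square)
    finally show ?thesis .
  qed
  have "2 * (\<Sum>k<K. a k) \<le> (\<Sum>k<K. (d k - d (Suc k)) / \<Gamma> k + \<Gamma> k * (norm (gg k))\<^sup>2)"
    unfolding sum_distrib_left using step by (intro sum_mono) auto
  also have "\<dots> = (\<Sum>k<K. (d k - d (Suc k)) / \<Gamma> k) + (\<Sum>k<K. \<Gamma> k * (norm (gg k))\<^sup>2)"
    by (rule sum.distrib)
  also have "(\<Sum>k<K. (d k - d (Suc k)) / \<Gamma> k) \<le> (D2 - d K) / \<Gamma> (K - 1)"
    using d0 Gpos Gmono dD K by (intro telescope) auto
  also have "\<dots> \<le> D2 / \<Gamma> (K - 1)"
    using d0 Gpos by (intro divide_right_mono) (auto simp: less_imp_le)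
  also have "\<dots> \<le> c (K - 1) * D2 / (gl * c 0)"
  proof -
    have D0: "D2 \<ge> 0" using dD[of 0] d0[of 0] K by linarith
    have "1 / \<Gamma> (K - 1) \<le> c (K - 1) / (gl * c 0)"
      using Gb[of "K - 1"] Gpos[of "K - 1"] gl c0 by (simp add: divide_simps mult.commute)
    then have "D2 * (1 / \<Gamma> (K - 1)) \<le> D2 * (c (K - 1) / (gl * c 0))"
      using D0 by (rule mult_left_mono)
    then show ?thesis by (simp add: mult.commute)
  qed
  also have "(\<Sum>k<K. \<Gamma> k * (norm (gg k))\<^sup>2) \<le> (\<Sum>k<K. c 0 * gb * G2 / c k)"
  proof (rule sum_mono)
    fix k assume k: "k \<in> {..<K}"
    have "\<Gamma> k \<le> c 0 * gb / c k"
      using Gb[of k] cpos by (simp add: divide_simps mult.commute)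
    then have "\<Gamma> k * (norm (gg k))\<^sup>2 \<le> (c 0 * gb / c k) * G2"
      using gG[of k] k Gpos[of k] by (intro mult_mono) auto
    then show "\<Gamma> k * (norm (gg k))\<^sup>2 \<le> c 0 * gb * G2 / c k" by simp
  qed
  finally have "2 * (\<Sum>k<K. a k) \<le> c (K - 1) * D2 / (gl * c 0) + (\<Sum>k<K. c 0 * gb * G2 / c k)"
    by simp
  then show ?thesis unfolding a_def x_def by simp
qed


lemma convex_partial_sum:
  fixes fs :: "nat \<Rightarrow> 'a::real_vector \<Rightarrow> real"
  assumes "\<forall>i<n. convex_on UNIV (fs i)" "m \<le> n"
  shows "convex_on UNIV (\<lambda>x. \<Sum>i<m. fs i x)"
  using assms(2)
proof (induction m)
  case 0 then show ?case by (simp add: convex_on_const)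
next
  case (Suc m)
  then have "convex_on UNIV (\<lambda>x. (\<Sum>i<m. fs i x) + fs m x)"
    using assms(1) by (intro convex_on_add) auto
  then show ?case by simp
qed

lemma convex_full:
  fixes fs :: "nat \<Rightarrow> 'a::real_vector \<Rightarrow> real"
  assumes "\<forall>i<n. convex_on UNIV (fs i)"
  shows "convex_on UNIV (full_f n fs)"
proof -
  have "convex_on UNIV (\<lambda>x. (\<Sum>i<n. fs i x) / real n)"
    using convex_partial_sum[OF assms order_refl] by (intro convex_on_cdiv) auto
  then show ?thesis unfolding full_f_def[abs_def] .
qed

theorem theorem5:
  fixes n B K :: nat
    and fs :: "nat \<Rightarrow> real^'d \<Rightarrow> real"
    and lstar :: "nat set \<Rightarrow> real"
    and g :: "nat set \<Rightarrow> real^'d \<Rightarrow> real^'d"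
    and c :: "nat \<Rightarrow> real"
    and gl gb :: real
    and x0 xstar :: "real^'d"
  assumes n_pos: "n \<ge> 1"
    and B: "1 \<le> B" "B \<le> n"
    and convex: "\<forall>i<n. convex_on UNIV (fs i)"
    and lower_bdd: "\<forall>i<n. \<exists>m. \<forall>x. m \<le> fs i x"
    and minimizer: "\<forall>x. full_f n fs xstar \<le> full_f n fs x"
    and lstar_le: "\<forall>S\<in>batches n B. \<forall>x. lstar S \<le> batch_f fs S x"
    and subgrad: "\<forall>S\<in>batches n B. \<forall>x. is_subgradient (batch_f fs S) x (g S x)"
    and c_mono: "mono c"
    and c_pos: "\<forall>k. c k > 0"
    and gammas: "0 < gl" "gl \<le> gb"
    and K: "K \<ge> 1"
  shows "batch_expect n B K (\<lambda>\<omega>.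
            full_f n fs ((1 / real K) *\<^sub>R (\<Sum>k<K. decsps_iter fs lstar g c gl gb x0 \<omega> k))
            - full_f n fs xstar)
         \<le> batch_expect n B K (\<lambda>\<omega>.
            let D2 = Max ((\<lambda>k. (norm (decsps_iter fs lstar g c gl gb x0 \<omega> k - xstar))\<^sup>2) ` {..<K});
                G2 = Max ((\<lambda>k. (norm (g (\<omega> k) (decsps_iter fs lstar g c gl gb x0 \<omega> k)))\<^sup>2) ` {..<K})
            in c (K - 1) * D2 / (gl * c 0 * real K)
               + (1 / real K) * (\<Sum>k<K. c 0 * gb * G2 / c k))"
proof -
  define A where "A = batches n B"
  define \<Omega> where "\<Omega> = PiE {..<K} (\<lambda>_. A)"
  define x where "x \<omega> k = decsps_iter fs lstar g c gl gb x0 \<omega> k" for \<omega> k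
  define F where "F = full_f n fs"
  define R where "R \<omega> = (let D2 = Max ((\<lambda>k. (norm (decsps_iter fs lstar g c gl gb x0 \<omega> k - xstar))\<^sup>2) ` {..<K});
                G2 = Max ((\<lambda>k. (norm (g (\<omega> k) (decsps_iter fs lstar g c gl gb x0 \<omega> k)))\<^sup>2) ` {..<K})
            in c (K - 1) * D2 / (gl * c 0 * real K)
               + (1 / real K) * (\<Sum>k<K. c 0 * gb * G2 / c k))" for \<omega>
  define Z where "Z \<omega> = (1 / real K) * (\<Sum>k<K. batch_f fs (\<omega> k) (x \<omega> k) - batch_f fs (\<omega> k) xstar)" for \<omega>
  define Y where "Y \<omega> = (1 / real K) * (\<Sum>k<K. F (x \<omega> k) - F xstar)" for \<omega>
  have finA: "finite A" unfolding A_def by (rule finite_batches)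
  have Ane: "{..<B} \<in> A" unfolding A_def batches_def using B by auto
  have cardA: "card A > 0" using finA Ane card_gt_0_iff by blast
  have finO: "finite \<Omega>" unfolding \<Omega>_def using finA by (intro finite_PiE) auto
  have cardO: "card \<Omega> > 0" unfolding \<Omega>_def using cardA by (simp add: card_PiE)
  have Kpos: "real K > 0" using K by simp
  have finK: "finite {..<K}" "{..<K} \<noteq> {}" using K by (auto simp: lessThan_empty_iff)
  have jensen: "F ((1 / real K) *\<^sub>R (\<Sum>k<K. x \<omega> k)) - F xstar \<le> Y \<omega>" for \<omega>
  proof -
    have "F (\<Sum>k<K. (1 / real K) *\<^sub>R x \<omega> k) \<le> (\<Sum>k<K. (1 / real K) * F (x \<omega> k))"
      using finK convex_full[OF convex] Kpos unfolding F_def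
      by (intro convex_on_sum) auto
    then show ?thesis unfolding Y_def using K
      by (simp add: scaleR_sum_right sum_distrib_left sum_subtractf right_diff_distrib finK(1))
  qed
  have key: "(\<Sum>\<omega>\<in>\<Omega>. F (X \<omega>)) = (\<Sum>\<omega>\<in>\<Omega>. batch_f fs (\<omega> k) (X \<omega>))"
    if k: "k < K" and dep: "\<And>\<omega> \<omega>'. (\<forall>j\<in>{..<K}-{k}. \<omega> j = \<omega>' j) \<Longrightarrow> X \<omega> = X \<omega>'" for k X
  proof -
    have "real (card A) * (\<Sum>\<omega>\<in>\<Omega>. F (X \<omega>)) = (\<Sum>\<omega>\<in>\<Omega>. \<Sum>S\<in>A. batch_f fs S (X \<omega>))"
      unfolding A_def F_def sum_distrib_left by (intro sum.cong) (auto simp: batch_avg[OF B])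
    also have "\<dots> = real (card A) * (\<Sum>\<omega>\<in>\<Omega>. batch_f fs (\<omega> k) (X \<omega>))"
      unfolding \<Omega>_def using k finA dep by (intro sum_PiE_indep) auto
    finally show ?thesis using cardA by simp
  qed
  have YZ: "(\<Sum>\<omega>\<in>\<Omega>. Y \<omega>) = (\<Sum>\<omega>\<in>\<Omega>. Z \<omega>)"
  proof -
    have "(\<Sum>\<omega>\<in>\<Omega>. F (x \<omega> k) - F xstar) = (\<Sum>\<omega>\<in>\<Omega>. batch_f fs (\<omega> k) (x \<omega> k) - batch_f fs (\<omega> k) xstar)"
      if k: "k < K" for k
    proof -
      have d1: "x \<omega> k = x \<omega>' k" if "\<forall>j\<in>{..<K}-{k}. \<omega> j = \<omega>' j" for \<omega> \<omega>'
        unfolding x_def decsps_iter_def using that k by (subst st_dep[of k \<omega> \<omega>']) auto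
      have "(\<Sum>\<omega>\<in>\<Omega>. F (x \<omega> k)) = (\<Sum>\<omega>\<in>\<Omega>. batch_f fs (\<omega> k) (x \<omega> k))"
        using key[OF k, of "\<lambda>\<omega>. x \<omega> k"] d1 by blast
      moreover have "(\<Sum>\<omega>\<in>\<Omega>. F xstar) = (\<Sum>\<omega>\<in>\<Omega>. batch_f fs (\<omega> k) xstar)"
        using key[OF k, of "\<lambda>\<omega>. xstar"] by blast
      ultimately show ?thesis by (simp add: sum_subtractf)
    qed
    then have "(\<Sum>k<K. \<Sum>\<omega>\<in>\<Omega>. F (x \<omega> k) - F xstar) = (\<Sum>k<K. \<Sum>\<omega>\<in>\<Omega>. batch_f fs (\<omega> k) (x \<omega> k) - batch_f fs (\<omega> k) xstar)"
      by (rule sum.cong[OF refl]) simp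
    moreover have "(\<Sum>\<omega>\<in>\<Omega>. Y \<omega>) = (1 / real K) * (\<Sum>k<K. \<Sum>\<omega>\<in>\<Omega>. F (x \<omega> k) - F xstar)"
      unfolding Y_def sum_distrib_left[symmetric] by (subst sum.swap) (rule refl)
    moreover have "(\<Sum>\<omega>\<in>\<Omega>. Z \<omega>) = (1 / real K) * (\<Sum>k<K. \<Sum>\<omega>\<in>\<Omega>. batch_f fs (\<omega> k) (x \<omega> k) - batch_f fs (\<omega> k) xstar)"
      unfolding Z_def sum_distrib_left[symmetric] by (subst sum.swap) (rule refl)
    ultimately show ?thesis by simp
  qed
  have ZR: "Z \<omega> \<le> R \<omega>" if om: "\<omega> \<in> \<Omega>" for \<omega>
  proof -
    define D2 where "D2 = Max ((\<lambda>k. (norm (decsps_iter fs lstar g c gl gb x0 \<omega> k - xstar))\<^sup>2) ` {..<K})"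
    define G2 where "G2 = Max ((\<lambda>k. (norm (g (\<omega> k) (decsps_iter fs lstar g c gl gb x0 \<omega> k)))\<^sup>2) ` {..<K})"
    define Q where "Q = c (K - 1) * D2 / (gl * c 0) + (\<Sum>k<K. c 0 * gb * G2 / c k)"
    have omA: "\<omega> k \<in> A" if "k < K" for k using om that unfolding \<Omega>_def by auto
    have sg: "\<forall>k<K. is_subgradient (batch_f fs (\<omega> k)) (decsps_iter fs lstar g c gl gb x0 \<omega> k)
                     (g (\<omega> k) (decsps_iter fs lstar g c gl gb x0 \<omega> k))"
      using subgrad omA unfolding A_def by blast
    have db: "(\<Sum>k<K. batch_f fs (\<omega> k) (x \<omega> k) - batch_f fs (\<omega> k) xstar) \<le> Q / 2"
      unfolding x_def Q_def D2_def G2_def by (rule det_bound[OF c_pos gammas c_mono K sg])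
    have K0: "0 \<in> {..<K}" using K by simp
    have "(norm (decsps_iter fs lstar g c gl gb x0 \<omega> 0 - xstar))\<^sup>2 \<le> D2"
      unfolding D2_def using finK K0 by (intro Max_ge) auto
    then have D0: "D2 \<ge> 0" by (rule order_trans[OF zero_le_power2])
    have "(norm (g (\<omega> 0) (decsps_iter fs lstar g c gl gb x0 \<omega> 0)))\<^sup>2 \<le> G2"
      unfolding G2_def using finK K0 by (intro Max_ge) auto
    then have G0: "G2 \<ge> 0" by (rule order_trans[OF zero_le_power2])
    have c0: "c 0 > 0" using c_pos by auto
    have Q0: "Q \<ge> 0" unfolding Q_def using D0 G0 c0 c_pos gammas
      by (intro add_nonneg_nonneg divide_nonneg_pos mult_nonneg_nonneg sum_nonneg) (auto simp: less_imp_le)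
    have "Z \<omega> \<le> (1 / real K) * (Q / 2)" unfolding Z_def using db Kpos by (intro mult_left_mono) auto
    also have "\<dots> \<le> (1 / real K) * Q" using Q0 Kpos by (intro mult_left_mono) auto
    also have "\<dots> = R \<omega>" unfolding R_def Q_def D2_def G2_def Let_def using Kpos
      by (simp add: field_simps)
    finally show ?thesis .
  qed
  have "(\<Sum>\<omega>\<in>\<Omega>. F ((1 / real K) *\<^sub>R (\<Sum>k<K. x \<omega> k)) - F xstar) \<le> (\<Sum>\<omega>\<in>\<Omega>. Y \<omega>)"
    using jensen by (intro sum_mono) auto
  also have "\<dots> = (\<Sum>\<omega>\<in>\<Omega>. Z \<omega>)" by (rule YZ)
  also have "\<dots> \<le> (\<Sum>\<omega>\<in>\<Omega>. R \<omega>)" using ZR by (intro sum_mono) auto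
  finally have main: "(\<Sum>\<omega>\<in>\<Omega>. F ((1 / real K) *\<^sub>R (\<Sum>k<K. x \<omega> k)) - F xstar) \<le> (\<Sum>\<omega>\<in>\<Omega>. R \<omega>)" .
  show ?thesis
    unfolding batch_expect_def Let_def
    using divide_right_mono[OF main, of "real (card \<Omega>)"] cardO
    unfolding \<Omega>_def A_def F_def x_def R_def Let_def by simp
qed

end
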